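(* Let $n\in\mathbb N$, $W=\{w_1,\dots,w_n\}$, $M=\{m_1,\dots,m_n\}$ disjoint, $\mu_{\mathrm{id}}$ the perfect marriage marrying $w_i$ to $m_i$ for all $i$, and $D=\{(i,j)\in\{1,\dots,n\}^2: i\ne j\}$. There exist functions $\succ_W:\{0,1\}^D\to\mathcal P(W,M)$ and $\succ_M:\{0,1\}^D\to\mathcal P(M,W)$ such that for all $\bar x,\bar y\in\{0,1\}^D$: (a) if $\mathrm{DISJ}(\bar x,\bar y)=1$ then $\mu_{\mathrm{id}}$ is the unique stable marriage with respect to $\succ_W(\bar x)$ and $\succ_M(\bar y)$; (b) if $\mathrm{DISJ}(\bar x,\bar y)=0$ then $\mu_{\mathrm{id}}$ is unstable with respect to $\succ_W(\bar x)$ and $\succ_M(\bar y)$.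
   Context: $\mathcal P(W,M)$ is the set of profiles assigning to each woman a preference list, i.e. a totally ordered subset of $M$ (men not on the list are unacceptable); $\mathcal P(M,W)$ analogously. A woman prefers $m$ over $m'$ if $m$ precedes $m'$ on her list, or $m$ is on her list and $m'$ is not (being single counts as having no spouse on the list); analogously for men. A marriage is a one-to-one map between a subset of $W$ and a subset of $M$ (others single). A marriage is stable if every married participant is married to someone on their list and there is no blocking pair $(w,m)$: $w$ prefers $m$ to her current situation and $m$ prefers $w$ to his. $\mathrm{DISJ}(\bar x,\bar y)=1$ if there is no index $(i,j)$ with $x^i_j=y^i_j=1$, and $0$ otherwise. *)

theory Defs
  imports Main
begin

(* Women w_1..w_n and men m_1..m_n are represented by their indices 0..n-1,
   in two separate roles (so W and M are disjoint by construction). *)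

(* a preference list: a totally ordered subset, i.e. a distinct list *)
definition precedes :: "'a list \<Rightarrow> 'a \<Rightarrow> 'a \<Rightarrow> bool" where
  "precedes L a b \<longleftrightarrow> (\<exists>xs ys. L = xs @ a # ys \<and> b \<in> set ys)"

(* a participant with list L prefers a over the situation c (None = single) *)
definition prefers :: "'a list \<Rightarrow> 'a \<Rightarrow> 'a option \<Rightarrow> bool" where
  "prefers L a c \<longleftrightarrow>
     (case c of None \<Rightarrow> a \<in> set L
      | Some b \<Rightarrow> precedes L a b \<or> (a \<in> set L \<and> b \<notin> set L))"

(* a profile in P(W,M) (resp. P(M,W)): each of the n agents gets a distinct
   list of agents of the other side *)
definition valid_profile :: "nat \<Rightarrow> (nat \<Rightarrow> nat list) \<Rightarrow> bool" where
  "valid_profile n P \<longleftrightarrow> (\<forall>i<n. distinct (P i) \<and> set (P i) \<subseteq> {0..<n})"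

definition is_marriage :: "nat \<Rightarrow> (nat \<times> nat) set \<Rightarrow> bool" where
  "is_marriage n \<mu> \<longleftrightarrow> \<mu> \<subseteq> {0..<n} \<times> {0..<n}
     \<and> (\<forall>w m m'. (w,m) \<in> \<mu> \<longrightarrow> (w,m') \<in> \<mu> \<longrightarrow> m = m')
     \<and> (\<forall>w w' m. (w,m) \<in> \<mu> \<longrightarrow> (w',m) \<in> \<mu> \<longrightarrow> w = w')"

definition husband :: "(nat \<times> nat) set \<Rightarrow> nat \<Rightarrow> nat option" where
  "husband \<mu> w = (if \<exists>m. (w,m) \<in> \<mu> then Some (THE m. (w,m) \<in> \<mu>) else None)"

definition wife :: "(nat \<times> nat) set \<Rightarrow> nat \<Rightarrow> nat option" where
  "wife \<mu> m = (if \<exists>w. (w,m) \<in> \<mu> then Some (THE w. (w,m) \<in> \<mu>) else None)"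

definition stable :: "nat \<Rightarrow> (nat \<Rightarrow> nat list) \<Rightarrow> (nat \<Rightarrow> nat list) \<Rightarrow> (nat \<times> nat) set \<Rightarrow> bool" where
  "stable n PW PM \<mu> \<longleftrightarrow> is_marriage n \<mu>
     \<and> (\<forall>(w,m) \<in> \<mu>. m \<in> set (PW w) \<and> w \<in> set (PM m))
     \<and> \<not> (\<exists>w<n. \<exists>m<n. prefers (PW w) m (husband \<mu> w) \<and> prefers (PM m) w (wife \<mu> m))"

definition mu_id :: "nat \<Rightarrow> (nat \<times> nat) set" where
  "mu_id n = {(i,i) | i. i < n}"

definition offdiag :: "nat \<Rightarrow> (nat \<times> nat) set" where
  "offdiag n = {(i,j). i < n \<and> j < n \<and> i \<noteq> j}"

(* {0,1}^D, represented as boolean functions vanishing outside D *)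
definition bitvecs :: "nat \<Rightarrow> (nat \<times> nat \<Rightarrow> bool) set" where
  "bitvecs n = {x. \<forall>p. p \<notin> offdiag n \<longrightarrow> \<not> x p}"

definition DISJ :: "nat \<Rightarrow> (nat \<times> nat \<Rightarrow> bool) \<Rightarrow> (nat \<times> nat \<Rightarrow> bool) \<Rightarrow> bool" where
  "DISJ n x y \<longleftrightarrow> \<not> (\<exists>p \<in> offdiag n. x p \<and> y p)"

end

theory Submission
  imports Defs
begin

definition PWc :: "nat \<Rightarrow> (nat \<times> nat \<Rightarrow> bool) \<Rightarrow> nat \<Rightarrow> nat list" where
  "PWc n x i = filter (\<lambda>j. j \<noteq> i \<and> x (i,j)) [0..<n] @ [i]"

definition PMc :: "nat \<Rightarrow> (nat \<times> nat \<Rightarrow> bool) \<Rightarrow> nat \<Rightarrow> nat list" where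
  "PMc n y j = filter (\<lambda>i. i \<noteq> j \<and> y (i,j)) [0..<n] @ [j]"

lemma prec_last:
  assumes "w \<notin> set F"
  shows "precedes (F @ [w]) m w \<longleftrightarrow> m \<in> set F"
proof
  assume "precedes (F @ [w]) m w"
  then obtain xs ys where e: "F @ [w] = xs @ m # ys" and "w \<in> set ys"
    unfolding precedes_def by blast
  then have "ys \<noteq> []" by auto
  then have "butlast (F @ [w]) = xs @ m # butlast ys"
    using e by (simp add: butlast_append)
  then show "m \<in> set F" by simp
next
  assume "m \<in> set F"
  then obtain xs ys where "F = xs @ m # ys" by (meson split_list)
  then show "precedes (F @ [w]) m w" unfolding precedes_def
    by (intro exI[of _ xs] exI[of _ "ys @ [w]"]) simp
qed

lemma prefW:
  assumes "w < n"
  shows "prefers (PWc n x w) m (Some w) \<longleftrightarrow> m \<noteq> w \<and> m < n \<and> x (w,m)"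
proof -
  have "w \<notin> set (filter (\<lambda>j. j \<noteq> w \<and> x (w,j)) [0..<n])" by simp
  from prec_last[OF this, of m] show ?thesis
    unfolding prefers_def PWc_def by auto
qed

lemma prefM:
  assumes "w < n"
  shows "prefers (PMc n y w) m (Some w) \<longleftrightarrow> m \<noteq> w \<and> m < n \<and> y (m,w)"
proof -
  have "w \<notin> set (filter (\<lambda>j. j \<noteq> w \<and> y (j,w)) [0..<n])" by simp
  from prec_last[OF this, of m] show ?thesis
    unfolding prefers_def PMc_def by auto
qed

lemma husband_id: "w < n \<Longrightarrow> husband (mu_id n) w = Some w"
  unfolding husband_def mu_id_def by auto

lemma wife_id: "w < n \<Longrightarrow> wife (mu_id n) w = Some w"
  unfolding wife_def mu_id_def by auto

lemma husband_none: "\<not> (\<exists>m. (w,m) \<in> \<mu>) \<Longrightarrow> husband \<mu> w = None"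
  unfolding husband_def by auto

lemma wife_none: "\<not> (\<exists>w. (w,m) \<in> \<mu>) \<Longrightarrow> wife \<mu> m = None"
  unfolding wife_def by auto

lemma marr_id: "is_marriage n (mu_id n)"
  unfolding is_marriage_def mu_id_def by auto

theorem lemma15:
  fixes n :: nat
  shows "\<exists>(FW :: (nat \<times> nat \<Rightarrow> bool) \<Rightarrow> nat \<Rightarrow> nat list)
            (FM :: (nat \<times> nat \<Rightarrow> bool) \<Rightarrow> nat \<Rightarrow> nat list).
     (\<forall>x \<in> bitvecs n. valid_profile n (FW x)) \<and>
     (\<forall>y \<in> bitvecs n. valid_profile n (FM y)) \<and>
     (\<forall>x \<in> bitvecs n. \<forall>y \<in> bitvecs n.
        (DISJ n x y \<longrightarrow> stable n (FW x) (FM y) (mu_id n) \<and>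
            (\<forall>\<mu>. stable n (FW x) (FM y) \<mu> \<longrightarrow> \<mu> = mu_id n)) \<and>
        (\<not> DISJ n x y \<longrightarrow> \<not> stable n (FW x) (FM y) (mu_id n)))"
proof (rule exI[of _ "PWc n"], rule exI[of _ "PMc n"], intro conjI ballI impI)
  fix x :: "nat \<times> nat \<Rightarrow> bool"
  show "valid_profile n (PWc n x)" unfolding valid_profile_def PWc_def by auto
next
  fix y :: "nat \<times> nat \<Rightarrow> bool"
  show "valid_profile n (PMc n y)" unfolding valid_profile_def PMc_def by auto
next
  fix x y assume D: "DISJ n x y"
  show "stable n (PWc n x) (PMc n y) (mu_id n)"
    unfolding stable_def
  proof (intro conjI marr_id)
    show "\<forall>(w, m)\<in>mu_id n. m \<in> set (PWc n x w) \<and> w \<in> set (PMc n y m)"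
      unfolding mu_id_def PWc_def PMc_def by auto
    show "\<not> (\<exists>w<n. \<exists>m<n. prefers (PWc n x w) m (husband (mu_id n) w) \<and>
                 prefers (PMc n y m) w (wife (mu_id n) m))"
      using D by (auto simp: husband_id wife_id prefW prefM DISJ_def offdiag_def)
  qed
next
  fix x y assume D: "DISJ n x y"
  show "\<forall>\<mu>. stable n (PWc n x) (PMc n y) \<mu> \<longrightarrow> \<mu> = mu_id n"
  proof (intro allI impI)
    fix \<mu> assume S: "stable n (PWc n x) (PMc n y) \<mu>"
    have M: "is_marriage n \<mu>" using S unfolding stable_def by blast
    have acc: "\<And>w m. (w,m) \<in> \<mu> \<Longrightarrow> m \<in> set (PWc n x w) \<and> w \<in> set (PMc n y m)"
      using S unfolding stable_def by blast
    have nb: "\<And>w m. w < n \<Longrightarrow> m < n \<Longrightarrow> \<not> (prefers (PWc n x w) m (husband \<mu> w) \<and>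
                 prefers (PMc n y m) w (wife \<mu> m))"
      using S unfolding stable_def by blast
    have diag: "\<And>w m. (w,m) \<in> \<mu> \<Longrightarrow> w = m \<and> w < n"
    proof -
      fix w m assume wm: "(w,m) \<in> \<mu>"
      have b: "w < n" "m < n" using M wm unfolding is_marriage_def by auto
      show "w = m \<and> w < n"
      proof (rule ccontr)
        assume "\<not> (w = m \<and> w < n)"
        then have "w \<noteq> m" using b by simp
        moreover have "x (w,m)" "y (w,m)" using acc[OF wm] \<open>w \<noteq> m\<close>
          unfolding PWc_def PMc_def by auto
        ultimately show False using D b unfolding DISJ_def offdiag_def by auto
      qed
    qed
    have "mu_id n \<subseteq> \<mu>"
    proof
      fix p assume "p \<in> mu_id n"
      then obtain i where p: "p = (i,i)" "i < n" unfolding mu_id_def by auto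
      show "p \<in> \<mu>"
      proof (rule ccontr)
        assume "p \<notin> \<mu>"
        then have h: "husband \<mu> i = None" and wf: "wife \<mu> i = None"
          using diag p by (auto intro!: husband_none wife_none)
        have "prefers (PWc n x i) i (husband \<mu> i)" "prefers (PMc n y i) i (wife \<mu> i)"
          unfolding h wf prefers_def PWc_def PMc_def by auto
        then show False using nb[OF p(2) p(2)] by blast
      qed
    qed
    moreover have "\<mu> \<subseteq> mu_id n" using diag unfolding mu_id_def by auto
    ultimately show "\<mu> = mu_id n" by blast
  qed
next
  fix x y assume D: "\<not> DISJ n x y"
  then obtain i j where ij: "i < n" "j < n" "i \<noteq> j" "x (i,j)" "y (i,j)"
    unfolding DISJ_def offdiag_def by auto
  have "prefers (PWc n x i) j (husband (mu_id n) i)"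
       "prefers (PMc n y j) i (wife (mu_id n) j)"
    using ij by (auto simp: husband_id wife_id prefW prefM)
  then show "\<not> stable n (PWc n x) (PMc n y) (mu_id n)"
    unfolding stable_def using ij by blast
qed

end
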